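(* Let $N\ge 1$, let $\boldsymbol{\theta}_1,\dots,\boldsymbol{\theta}_N\in\mathbb{R}^d$, and let $\boldsymbol{C}\in\mathbb{R}^{N\times N}$ be the squared Euclidean distance matrix $\boldsymbol{C}(r,s)=\|\boldsymbol{\theta}_r-\boldsymbol{\theta}_s\|_2^2$. Fix $\varepsilon>0$, $\alpha>0$, $\boldsymbol{a}\in\mathbb{R}^N\setminus\{\boldsymbol{0}\}$ and $\boldsymbol{\zeta}\in\Delta^{N-1}$. Let $\boldsymbol{\Phi}(\boldsymbol{\mu}):=\langle \boldsymbol{a},\boldsymbol{\mu}\rangle$ for $\boldsymbol{\mu}\in\Delta^{N-1}$, and let $\boldsymbol{\Gamma}:=\exp(-\boldsymbol{C}/(2\varepsilon))$ (entrywise exponential). Then the entropy-regularized Wasserstein proximal operator $$\mathrm{prox}^{W_\varepsilon}_{\frac{1}{\alpha}\boldsymbol{\Phi}}(\boldsymbol{\zeta}) := \underset{\boldsymbol{\mu}\in\Delta^{N-1}}{\arg\inf}\left\{\min_{\boldsymbol{M}\in\Pi_N(\boldsymbol{\mu},\boldsymbol{\zeta})}\left\langle \tfrac12\boldsymbol{C}+\varepsilon\log\boldsymbol{M},\,\boldsymbol{M}\right\rangle+\frac{1}{\alpha}\boldsymbol{\Phi}(\boldsymbol{\mu})\right\}$$ is given by $$\mathrm{prox}^{W_\varepsilon}_{\frac{1}{\alpha}\boldsymbol{\Phi}}(\boldsymbol{\zeta}) = \exp\!\left(-\tfrac{1}{\alpha\varepsilon}\boldsymbol{a}\right)\odot\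left(\boldsymbol{\Gamma}^{\top}\left(\boldsymbol{\zeta}\oslash\left(\boldsymbol{\Gamma}\exp\!\left(-\tfrac{1}{\alpha\varepsilon}\boldsymbol{a}\right)\right)\right)\right).$$
   Context: $\Delta^{N-1}:=\{\boldsymbol{x}\in\mathbb{R}^N:\boldsymbol{x}\ge\boldsymbol{0},\ \boldsymbol{1}^\top\boldsymbol{x}=1\}$ is the probability simplex. For $\boldsymbol{\xi},\boldsymbol{\eta}\in\Delta^{N-1}$, $\Pi_N(\boldsymbol{\xi},\boldsymbol{\eta}):=\{\boldsymbol{M}\in\mathbb{R}^{N\times N}: \boldsymbol{M}\ge\boldsymbol{0}\text{ entrywise},\ \boldsymbol{M}\boldsymbol{1}=\boldsymbol{\xi},\ \boldsymbol{M}^\top\boldsymbol{1}=\boldsymbol{\eta}\}$, where $\boldsymbol{1}$ is the all-ones vector. For matrices, $\langle \boldsymbol{A},\boldsymbol{B}\rangle=\sum_{r,s}\boldsymbol{A}(r,s)\boldsymbol{B}(r,s)$; $\log\boldsymbol{M}$ and $\exp(\cdot)$ act entrywise, with the convention $0\log 0=0$. The symbols $\odot$ and $\oslash$ denote entrywise (Hadamard) multiplication and division of vectors. *)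

theory Defs
  imports "HOL-Analysis.Analysis"
begin

text \<open>Vectors in R^N are functions on a finite index type 'n (so N = CARD('n) \<ge> 1);
  N x N matrices are functions 'n \<Rightarrow> 'n \<Rightarrow> real.\<close>

definition prob_simplex :: "('n::finite \<Rightarrow> real) set" where
  "prob_simplex = {x. (\<forall>i. x i \<ge> 0) \<and> (\<Sum>i\<in>UNIV. x i) = 1}"

definition couplings :: "('n::finite \<Rightarrow> real) \<Rightarrow> ('n \<Rightarrow> real) \<Rightarrow> ('n \<Rightarrow> 'n \<Rightarrow> real) set" where
  "couplings \<xi> \<eta> = {M. (\<forall>r s. M r s \<ge> 0) \<and> (\<forall>r. (\<Sum>s\<in>UNIV. M r s) = \<xi> r)
                        \<and> (\<forall>s. (\<Sum>r\<in>UNIV. M r s) = \<eta> s)}"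

text \<open>\<langle>C/2 + \<epsilon> log M, M\<rangle>; since ln 0 = 0 in Isabelle, 0 log 0 = 0 holds.\<close>
definition ent_cost :: "('n::finite \<Rightarrow> 'n \<Rightarrow> real) \<Rightarrow> real \<Rightarrow> ('n \<Rightarrow> 'n \<Rightarrow> real) \<Rightarrow> real" where
  "ent_cost C \<epsilon> M = (\<Sum>r\<in>UNIV. \<Sum>s\<in>UNIV. (C r s / 2 + \<epsilon> * ln (M r s)) * M r s)"

definition prox_objective ::
  "('n::finite \<Rightarrow> 'n \<Rightarrow> real) \<Rightarrow> real \<Rightarrow> real \<Rightarrow> ('n \<Rightarrow> real) \<Rightarrow> ('n \<Rightarrow> real) \<Rightarrow> ('n \<Rightarrow> real) \<Rightarrow> real" where
  "prox_objective C \<epsilon> \<alpha> a \<zeta> \<mu> =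
     Inf (ent_cost C \<epsilon> ` couplings \<mu> \<zeta>) + (1 / \<alpha>) * (\<Sum>i\<in>UNIV. a i * \<mu> i)"

text \<open>The arg inf, as the set of minimizers over the prob_simplex.\<close>
definition prox_W ::
  "('n::finite \<Rightarrow> 'n \<Rightarrow> real) \<Rightarrow> real \<Rightarrow> real \<Rightarrow> ('n \<Rightarrow> real) \<Rightarrow> ('n \<Rightarrow> real) \<Rightarrow> ('n \<Rightarrow> real) set" where
  "prox_W C \<epsilon> \<alpha> a \<zeta> = {\<mu> \<in> prob_simplex. \<forall>\<nu> \<in> prob_simplex.
      prox_objective C \<epsilon> \<alpha> a \<zeta> \<mu> \<le> prox_objective C \<epsilon> \<alpha> a \<zeta> \<nu>}"

end

theory Submission
  imports Defs
begin
lemma D_bound: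
  fixes p q :: real
  assumes p0: "0 \<le> p" and p1: "p \<le> 1" and q0: "0 \<le> q" and q1: "q \<le> 1"
    and qz: "q = 0 \<Longrightarrow> p = 0"
  shows "(p - q)\<^sup>2 / 4 \<le> p * ln p - p * ln q - p + q"
proof (cases "p = 0")
  case True
  have "q * q \<le> 4 * q" using q0 q1 by (intro mult_right_mono) auto
  then show ?thesis using True by (simp add: power2_eq_square)
next
  case False
  hence pp: "p > 0" using p0 by auto
  hence qp: "q > 0" using qz q0 by force
  define u where "u = sqrt p"
  define v where "v = sqrt q"
  have u: "u > 0" "u\<^sup>2 = p" "u \<le> 1" using pp p1 by (auto simp: u_def)
  have v: "v > 0" "v\<^sup>2 = q" "v \<le> 1" using qp q1 by (auto simp: v_def)
  have lnp: "ln p = 2 * ln u" using u(1) unfolding u(2)[symmetric] by (simp add: ln_realpow)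
  have lnq: "ln q = 2 * ln v" using v(1) unfolding v(2)[symmetric] by (simp add: ln_realpow)
  have "ln (v / u) \<le> v / u - 1" using u v by (intro ln_le_minus_one) auto
  hence "ln v - ln u \<le> v / u - 1" using u v by (simp add: ln_div)
  hence "u\<^sup>2 * (ln v - ln u) \<le> u\<^sup>2 * (v / u - 1)" using u(1) by (intro mult_left_mono) auto
  also have "u\<^sup>2 * (v / u - 1) = u * v - u\<^sup>2" using u(1) by (simp add: power2_eq_square field_simps)
  finally have A: "u\<^sup>2 * (ln v - ln u) \<le> u * v - u\<^sup>2" .
  have B: "(p - q)\<^sup>2 = (u - v)\<^sup>2 * (u + v)\<^sup>2" unfolding u(2)[symmetric] v(2)[symmetric] by (simp add: power2_eq_square algebra_simps)
  have "u + v \<le> 2" using u v by linarith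
  hence "(u + v)\<^sup>2 \<le> 2\<^sup>2" using u v by (intro power_mono) auto
  hence "(u - v)\<^sup>2 * (u + v)\<^sup>2 \<le> (u - v)\<^sup>2 * 4" by (intro mult_left_mono) auto
  hence "(p - q)\<^sup>2 / 4 \<le> (u - v)\<^sup>2" unfolding B by simp
  also have "\<dots> \<le> p * ln p - p * ln q - p + q"
  proof -
    have E: "p * ln p - p * ln q - p + q = 2 * (u\<^sup>2 * (ln u - ln v)) - u\<^sup>2 + v\<^sup>2"
      by (simp add: lnp lnq u(2) v(2) algebra_simps)
    have F: "(u - v)\<^sup>2 = u\<^sup>2 - 2 * (u * v) + v\<^sup>2" by (simp add: power2_diff)
    have G: "u\<^sup>2*(ln u - ln v) = - (u\<^sup>2*(ln v - ln u))" by (simp add: algebra_simps)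
    show ?thesis unfolding E F G using A by linarith
  qed
  finally show ?thesis .
qed

definition Dq :: "real \<Rightarrow> real \<Rightarrow> real" where
  "Dq p q = p * ln p - p * ln q - p + q"

theorem theorem1:
  fixes \<theta> :: "'n::finite \<Rightarrow> real ^ 'd"
    and C \<Gamma> :: "'n \<Rightarrow> 'n \<Rightarrow> real"
    and \<epsilon> \<alpha> :: real
    and a \<zeta> K :: "'n \<Rightarrow> real"
  assumes C_def: "\<And>r s. C r s = (norm (\<theta> r - \<theta> s))\<^sup>2"
    and eps: "\<epsilon> > 0" and alpha: "\<alpha> > 0"
    and a_nz: "a \<noteq> (\<lambda>_. 0)"
    and zeta: "\<zeta> \<in> prob_simplex"
    and Gamma_def: "\<And>r s. \<Gamma> r s = exp (- C r s / (2 * \<epsilon>))"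
    and K_def: "\<And>i. K i = exp (- a i / (\<alpha> * \<epsilon>))"
  shows "prox_W C \<epsilon> \<alpha> a \<zeta> =
    {\<lambda>r. K r * (\<Sum>s\<in>UNIV. \<Gamma> s r * (\<zeta> s / (\<Sum>t\<in>UNIV. \<Gamma> s t * K t)))}"
proof -
  define Z where "Z s = (\<Sum>t\<in>UNIV. \<Gamma> t s * K t)" for s
  define Q where "Q r s = \<zeta> s * (\<Gamma> r s * K r) / Z s" for r s
  define \<mu>s where "\<mu>s r = (\<Sum>s\<in>UNIV. Q r s)" for r
  define L where "L = (\<Sum>s\<in>UNIV. \<epsilon> * (ln (\<zeta> s) - ln (Z s)) * \<zeta> s)"
  define N where "N = real CARD('n)"
  define lin where "lin \<mu> = (\<Sum>i\<in>UNIV. a i * \<mu> i)" for \<mu> :: "'n \<Rightarrow> real"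
  have Npos: "N > 0" by (simp add: N_def)
  have Gpos: "\<Gamma> r s > 0" for r s by (simp add: Gamma_def)
  have Kpos: "K r > 0" for r by (simp add: K_def)
  have GK: "\<Gamma> r s * K r > 0" for r s using Gpos Kpos by simp
  have Zpos: "Z s > 0" for s unfolding Z_def using GK by (intro sum_pos) auto
  have GKle: "\<Gamma> r s * K r \<le> Z s" for r s unfolding Z_def
    using GK by (intro member_le_sum) (auto intro: less_imp_le)
  have z0: "\<zeta> s \<ge> 0" for s using zeta by (simp add: prob_simplex_def)
  have zsum: "(\<Sum>s\<in>UNIV. \<zeta> s) = 1" using zeta by (simp add: prob_simplex_def)
  have z1: "\<zeta> s \<le> 1" for s
  proof -
    have "\<zeta> s \<le> (\<Sum>s\<in>UNIV. \<zeta> s)" using z0 by (intro member_le_sum) auto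
    thus ?thesis using zsum by simp
  qed
  have Q0: "Q r s \<ge> 0" for r s unfolding Q_def using z0 GK Zpos by (simp add: less_imp_le)
  have Qle: "Q r s \<le> \<zeta> s" for r s
  proof -
    have "(\<Gamma> r s * K r) / Z s \<le> 1" using GKle Zpos by simp
    hence "\<zeta> s * ((\<Gamma> r s * K r) / Z s) \<le> \<zeta> s * 1" using z0 by (intro mult_left_mono) auto
    thus ?thesis by (simp add: Q_def)
  qed
  have Qcol: "(\<Sum>r\<in>UNIV. Q r s) = \<zeta> s" for s
  proof -
    have "(\<Sum>r\<in>UNIV. Q r s) = \<zeta> s * (\<Sum>r\<in>UNIV. \<Gamma> r s * K r) / Z s"
      unfolding Q_def by (simp add: sum_distrib_left sum_divide_distrib)
    also have "\<dots> = \<zeta> s" using Zpos[of s] by (simp add: Z_def)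
    finally show ?thesis .
  qed
  have Qcoup: "Q \<in> couplings \<mu>s \<zeta>"
    unfolding couplings_def using Q0 Qcol by (simp add: \<mu>s_def)
  have \<mu>s_simp: "\<mu>s \<in> prob_simplex"
  proof -
    have "(\<Sum>r\<in>UNIV. \<mu>s r) = 1" unfolding \<mu>s_def
      by (subst sum.swap) (simp add: Qcol zsum)
    moreover have "\<mu>s r \<ge> 0" for r unfolding \<mu>s_def using Q0 by (simp add: sum_nonneg)
    ultimately show ?thesis by (simp add: prob_simplex_def)
  qed
  have lnQ: "ln (Q r s) = ln (\<zeta> s) - C r s / (2 * \<epsilon>) - a r / (\<alpha> * \<epsilon>) - ln (Z s)"
    if "\<zeta> s > 0" for r s
    using that Zpos[of s] Gpos[of r s] Kpos[of r]
    by (simp add: Q_def ln_div ln_mult Gamma_def K_def)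
  have entry: "(C r s / 2 + \<epsilon> * ln (M r s)) * M r s + (1/\<alpha>) * (a r * M r s)
      = \<epsilon> * (ln (\<zeta> s) - ln (Z s)) * M r s + \<epsilon> * (M r s - Q r s) + \<epsilon> * Dq (M r s) (Q r s)"
    if M: "M \<in> couplings \<mu> \<zeta>" for M \<mu> r s
  proof (cases "\<zeta> s = 0")
    case True
    have "(\<Sum>r\<in>UNIV. M r s) = 0" using M True by (simp add: couplings_def)
    moreover have "\<forall>r\<in>UNIV. M r s \<ge> 0" using M by (simp add: couplings_def)
    ultimately have "M r s = 0" by (simp add: sum_nonneg_eq_0_iff)
    moreover have "Q r s = 0" using True by (simp add: Q_def)
    ultimately show ?thesis by (simp add: Dq_def)
  next
    case False
    hence zp: "\<zeta> s > 0" using z0[of s] by simp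
    show ?thesis unfolding Dq_def lnQ[OF zp] using eps alpha
      by (simp add: field_simps)
  qed
  have J: "ent_cost C \<epsilon> M + (1/\<alpha>) * lin \<mu> = L + \<epsilon> * (\<Sum>r\<in>UNIV. \<Sum>s\<in>UNIV. Dq (M r s) (Q r s))"
    if M: "M \<in> couplings \<mu> \<zeta>" for M \<mu>
  proof -
    have rows: "\<mu> r = (\<Sum>s\<in>UNIV. M r s)" for r using M by (simp add: couplings_def)
    have cols: "(\<Sum>r\<in>UNIV. M r s) = \<zeta> s" for s using M by (simp add: couplings_def)
    have "ent_cost C \<epsilon> M + (1/\<alpha>) * lin \<mu> =
      (\<Sum>r\<in>UNIV. \<Sum>s\<in>UNIV. (C r s / 2 + \<epsilon> * ln (M r s)) * M r s + (1/\<alpha>) * (a r * M r s))"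
      unfolding ent_cost_def lin_def rows by (simp add: sum.distrib sum_distrib_left)
    also have "\<dots> = (\<Sum>r\<in>UNIV. \<Sum>s\<in>UNIV. \<epsilon> * (ln (\<zeta> s) - ln (Z s)) * M r s + \<epsilon> * (M r s - Q r s) + \<epsilon> * Dq (M r s) (Q r s))"
      using entry[OF M] by simp
    also have "\<dots> = (\<Sum>r\<in>UNIV. \<Sum>s\<in>UNIV. \<epsilon> * (ln (\<zeta> s) - ln (Z s)) * M r s)
        + (\<Sum>r\<in>UNIV. \<Sum>s\<in>UNIV. \<epsilon> * (M r s - Q r s))
        + (\<Sum>r\<in>UNIV. \<Sum>s\<in>UNIV. \<epsilon> * Dq (M r s) (Q r s))"
      by (simp only: sum.distrib)
    moreover have e1: "(\<Sum>r\<in>UNIV. \<Sum>s\<in>UNIV. \<epsilon> * (ln (\<zeta> s) - ln (Z s)) * M r s)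
        = (\<Sum>s\<in>UNIV. \<epsilon> * (ln (\<zeta> s) - ln (Z s)) * (\<Sum>r\<in>UNIV. M r s))"
      by (subst sum.swap) (simp add: sum_distrib_left)
    moreover have e2: "(\<Sum>r\<in>UNIV. \<Sum>s\<in>UNIV. \<epsilon> * (M r s - Q r s))
        = \<epsilon> * (\<Sum>s\<in>UNIV. (\<Sum>r\<in>UNIV. M r s) - (\<Sum>r\<in>UNIV. Q r s))"
      by (subst sum.swap) (simp add: sum_distrib_left sum_subtractf right_diff_distrib)
    moreover have e3: "(\<Sum>r\<in>UNIV. \<Sum>s\<in>UNIV. \<epsilon> * Dq (M r s) (Q r s))
        = \<epsilon> * (\<Sum>r\<in>UNIV. \<Sum>s\<in>UNIV. Dq (M r s) (Q r s))"
      by (simp add: sum_distrib_left)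
    ultimately show ?thesis
      unfolding e1 e2 e3 by (simp add: cols Qcol L_def)
  qed
  have Mle: "M r s \<le> \<zeta> s" if M: "M \<in> couplings \<mu> \<zeta>" for M \<mu> r s
  proof -
    have "M r s \<le> (\<Sum>r\<in>UNIV. M r s)" using M by (intro member_le_sum) (auto simp: couplings_def)
    thus ?thesis using M by (simp add: couplings_def)
  qed
  have Dsum: "(\<Sum>r\<in>UNIV. \<Sum>s\<in>UNIV. (M r s - Q r s)\<^sup>2) / 4 \<le> (\<Sum>r\<in>UNIV. \<Sum>s\<in>UNIV. Dq (M r s) (Q r s))"
    if M: "M \<in> couplings \<mu> \<zeta>" for M \<mu>
  proof -
    have "(M r s - Q r s)\<^sup>2 / 4 \<le> Dq (M r s) (Q r s)" for r s
      unfolding Dq_def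
    proof (rule D_bound)
      show "0 \<le> M r s" using M by (simp add: couplings_def)
      show "M r s \<le> 1" using Mle[OF M, of r s] z1[of s] by simp
      show "0 \<le> Q r s" by (rule Q0)
      show "Q r s \<le> 1" using Qle[of r s] z1[of s] by simp
      show "M r s = 0" if "Q r s = 0"
      proof -
        have "\<zeta> s = 0" using that Gpos[of r s] Kpos[of r] Zpos[of s] by (simp add: Q_def)
        thus ?thesis using Mle[OF M, of r s] \<open>0 \<le> M r s\<close> by simp
      qed
    qed
    hence "(\<Sum>r\<in>UNIV. \<Sum>s\<in>UNIV. (M r s - Q r s)\<^sup>2 / 4) \<le> (\<Sum>r\<in>UNIV. \<Sum>s\<in>UNIV. Dq (M r s) (Q r s))"
      by (intro sum_mono) auto
    thus ?thesis by (simp add: sum_divide_distrib)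
  qed
  define d where "d \<mu> = (\<Sum>r\<in>UNIV. (\<mu> r - \<mu>s r)\<^sup>2)" for \<mu> :: "'n \<Rightarrow> real"
  have d0: "d \<mu> \<ge> 0" for \<mu> unfolding d_def by (simp add: sum_nonneg)
  have lower: "L + \<epsilon> / (4 * N) * d \<mu> \<le> ent_cost C \<epsilon> M + (1/\<alpha>) * lin \<mu>"
    if M: "M \<in> couplings \<mu> \<zeta>" for M \<mu>
  proof -
    have rows: "\<mu> r = (\<Sum>s\<in>UNIV. M r s)" for r using M by (simp add: couplings_def)
    have "d \<mu> = (\<Sum>r\<in>UNIV. (\<Sum>s\<in>UNIV. M r s - Q r s)\<^sup>2)"
      unfolding d_def rows \<mu>s_def by (simp add: sum_subtractf)
    also have "\<dots> \<le> (\<Sum>r\<in>UNIV. (\<Sum>s\<in>UNIV. (M r s - Q r s)\<^sup>2) * N)"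
      unfolding N_def using sum_squared_le_sum_of_squares by (intro sum_mono) blast
    also have "\<dots> = N * (\<Sum>r\<in>UNIV. \<Sum>s\<in>UNIV. (M r s - Q r s)\<^sup>2)"
      by (simp add: sum_distrib_left mult.commute)
    also have "\<dots> \<le> N * (4 * (\<Sum>r\<in>UNIV. \<Sum>s\<in>UNIV. Dq (M r s) (Q r s)))"
      using Dsum[OF M] Npos by (intro mult_left_mono) auto
    finally have "d \<mu> \<le> 4 * N * (\<Sum>r\<in>UNIV. \<Sum>s\<in>UNIV. Dq (M r s) (Q r s))" by simp
    hence "d \<mu> / (4 * N) \<le> (\<Sum>r\<in>UNIV. \<Sum>s\<in>UNIV. Dq (M r s) (Q r s))"
      using Npos by (simp add: divide_le_eq mult.commute)
    hence "\<epsilon> * (d \<mu> / (4 * N)) \<le> \<epsilon> * (\<Sum>r\<in>UNIV. \<Sum>s\<in>UNIV. Dq (M r s) (Q r s))"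
      using eps by (intro mult_left_mono) auto
    thus ?thesis using J[OF M] by simp
  qed
  have nonempty: "couplings \<mu> \<zeta> \<noteq> {}" if "\<mu> \<in> prob_simplex" for \<mu>
  proof -
    have "(\<lambda>r s. \<mu> r * \<zeta> s) \<in> couplings \<mu> \<zeta>"
      using that zeta by (simp add: couplings_def prob_simplex_def sum_distrib_left[symmetric] sum_distrib_right[symmetric])
    thus ?thesis by blast
  qed
  have objlow: "L + \<epsilon> / (4 * N) * d \<mu> \<le> prox_objective C \<epsilon> \<alpha> a \<zeta> \<mu>" if "\<mu> \<in> prob_simplex" for \<mu>
  proof -
    have "L + \<epsilon> / (4 * N) * d \<mu> - (1/\<alpha>) * lin \<mu> \<le> Inf (ent_cost C \<epsilon> ` couplings \<mu> \<zeta>)"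
      using nonempty[OF that] lower by (intro cInf_greatest) fastforce+
    thus ?thesis unfolding prox_objective_def lin_def by simp
  qed
  have objup: "prox_objective C \<epsilon> \<alpha> a \<zeta> \<mu>s \<le> L"
  proof -
    have bdd: "bdd_below (ent_cost C \<epsilon> ` couplings \<mu>s \<zeta>)"
    proof
      fix x assume "x \<in> ent_cost C \<epsilon> ` couplings \<mu>s \<zeta>"
      then obtain M where "M \<in> couplings \<mu>s \<zeta>" "x = ent_cost C \<epsilon> M" by blast
      thus "L - (1/\<alpha>) * lin \<mu>s \<le> x" using lower[of M \<mu>s] d0[of \<mu>s] eps Npos
        by (smt (verit) divide_nonneg_nonneg mult_nonneg_nonneg)
    qed
    have "Inf (ent_cost C \<epsilon> ` couplings \<mu>s \<zeta>) \<le> ent_cost C \<epsilon> Q"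
      using Qcoup bdd by (intro cInf_lower) auto
    moreover have "ent_cost C \<epsilon> Q + (1/\<alpha>) * lin \<mu>s = L"
      using J[OF Qcoup] by (simp add: Dq_def)
    ultimately show ?thesis unfolding prox_objective_def lin_def by simp
  qed
  have sym: "\<Gamma> r s = \<Gamma> s r" for r s by (simp add: Gamma_def C_def norm_minus_commute)
  have target: "\<mu>s = (\<lambda>r. K r * (\<Sum>s\<in>UNIV. \<Gamma> s r * (\<zeta> s / (\<Sum>t\<in>UNIV. \<Gamma> s t * K t))))"
  proof
    fix r
    have "\<mu>s r = (\<Sum>s\<in>UNIV. K r * (\<Gamma> s r * (\<zeta> s / (\<Sum>t\<in>UNIV. \<Gamma> s t * K t))))"
      unfolding \<mu>s_def Q_def Z_def by (intro sum.cong) (auto simp: sym)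
    thus "\<mu>s r = K r * (\<Sum>s\<in>UNIV. \<Gamma> s r * (\<zeta> s / (\<Sum>t\<in>UNIV. \<Gamma> s t * K t)))"
      by (simp add: sum_distrib_left)
  qed
  have "prox_W C \<epsilon> \<alpha> a \<zeta> = {\<mu>s}"
  proof (intro equalityI subsetI)
    fix \<mu> assume "\<mu> \<in> prox_W C \<epsilon> \<alpha> a \<zeta>"
    hence \<mu>: "\<mu> \<in> prob_simplex" and le: "prox_objective C \<epsilon> \<alpha> a \<zeta> \<mu> \<le> prox_objective C \<epsilon> \<alpha> a \<zeta> \<mu>s"
      using \<mu>s_simp by (auto simp: prox_W_def)
    have "\<epsilon> / (4 * N) * d \<mu> \<le> 0" using objlow[OF \<mu>] le objup by simp
    hence "d \<mu> \<le> 0" using eps Npos by (simp add: divide_le_0_iff mult_le_0_iff)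
    hence "d \<mu> = 0" using d0[of \<mu>] by simp
    hence "\<forall>r\<in>UNIV. (\<mu> r - \<mu>s r)\<^sup>2 = 0" unfolding d_def by (subst (asm) sum_nonneg_eq_0_iff) auto
    hence "\<mu> = \<mu>s" by auto
    thus "\<mu> \<in> {\<mu>s}" by simp
  next
    fix \<mu> assume "\<mu> \<in> {\<mu>s}"
    hence "\<mu> = \<mu>s" by simp
    moreover have "\<forall>\<nu>\<in>prob_simplex. prox_objective C \<epsilon> \<alpha> a \<zeta> \<mu>s \<le> prox_objective C \<epsilon> \<alpha> a \<zeta> \<nu>"
    proof
      fix \<nu> :: "'n \<Rightarrow> real" assume "\<nu> \<in> prob_simplex"
      hence "L + \<epsilon> / (4 * N) * d \<nu> \<le> prox_objective C \<epsilon> \<alpha> a \<zeta> \<nu>" by (rule objlow)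
      moreover have "0 \<le> \<epsilon> / (4 * N) * d \<nu>" using eps Npos d0[of \<nu>] by simp
      ultimately show "prox_objective C \<epsilon> \<alpha> a \<zeta> \<mu>s \<le> prox_objective C \<epsilon> \<alpha> a \<zeta> \<nu>" using objup by linarith
    qed
    ultimately show "\<mu> \<in> prox_W C \<epsilon> \<alpha> a \<zeta>" using \<mu>s_simp by (simp add: prox_W_def)
  qed
  thus ?thesis using target by simp
qed
end
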